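(* Let $\tau\in\mathbb{R}$ be such that $\mathbf B(\tau,0)=I$. Then \[ \frac{\partial\,\mathrm{tr}\,\mathbf B}{\partial\sigma}(\tau,0)=0\qquad\text{and}\qquad\frac{\partial^2\mathrm{tr}\,\mathbf B}{\partial\sigma^2}(\tau,0)\neq 0 . \]
   Context: Fix $a>0$, $b\in\mathbb{R}\setminus\{0\}$, $\nu\in[0,1)$, an integer $k\ge 2$ and $c\in C^k(\mathbb{S}^1,\mathbb{C})$ ($2\pi$-periodic). For $\epsilon\in\mathbb{R}$ let $\lambda_\epsilon=a+ib\epsilon$. For $\sigma\in\mathbb{C}$, $\epsilon\in\mathbb{R}$ consider the system $\dot V=\mathbf M(t,\sigma,\epsilon)V$ with \[ \mathbf M(t,\sigma,\epsilon)=\begin{pmatrix} i\frac{\sigma-\lambda_\epsilon\nu}{\lambda_\epsilon} & \frac{c(t)}{\lambda_\epsilon}\\ \frac{\overline{c(t)}}{\overline{\lambda_\epsilon}} & -i\frac{\sigma-\overline{\lambda_\epsilon}\nu}{\overline{\lambda_\epsilon}}\end{pmatrix}, \] let $\mathbf V(t,\sigma,\epsilon)$ be its fundamental matrix with $\mathbf V(0,\sigma,\epsilon)=I$, and let $\mathbf B(\sigma,\epsilon)=\mathbf V(2\pi,\sigma,\epsilon)$ be the monodromy matrix (entire in $\sigma$). *)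

theory Defs
  imports "HOL-Analysis.Analysis"
begin

definition Ck_fun :: "nat \<Rightarrow> (real \<Rightarrow> complex) \<Rightarrow> bool" where
  "Ck_fun k c \<longleftrightarrow> (\<exists>D :: nat \<Rightarrow> real \<Rightarrow> complex. D 0 = c \<and>
      (\<forall>j<k. \<forall>t. (D j has_vector_derivative D (Suc j) t) (at t)) \<and>
      continuous_on UNIV (D k))"

text \<open>c \<in> C^k(S^1, C), viewed as a 2 pi-periodic function on R.\<close>
definition Ck_circle :: "nat \<Rightarrow> (real \<Rightarrow> complex) \<Rightarrow> bool" where
  "Ck_circle k c \<longleftrightarrow> Ck_fun k c \<and> (\<forall>t. c (t + 2 * pi) = c t)"

definition lam :: "real \<Rightarrow> real \<Rightarrow> real \<Rightarrow> complex" where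
  "lam a b \<epsilon> = complex_of_real a + \<i> * complex_of_real (b * \<epsilon>)"

definition Mmat :: "real \<Rightarrow> real \<Rightarrow> real \<Rightarrow> (real \<Rightarrow> complex) \<Rightarrow>
    real \<Rightarrow> complex \<Rightarrow> real \<Rightarrow> complex^2^2" where
  "Mmat a b \<nu> c t \<sigma> \<epsilon> = (let l = lam a b \<epsilon> in
     (\<chi> i j. if i = 1 \<and> j = 1 then \<i> * (\<sigma> - l * complex_of_real \<nu>) / l
       else if i = 1 \<and> j = 2 then c t / l
       else if i = 2 \<and> j = 1 then cnj (c t) / cnj l
       else - \<i> * (\<sigma> - cnj l * complex_of_real \<nu>) / cnj l))"

definition Vfund :: "real \<Rightarrow> real \<Rightarrow> real \<Rightarrow> (real \<Rightarrow> complex) \<Rightarrow>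
    complex \<Rightarrow> real \<Rightarrow> real \<Rightarrow> complex^2^2" where
  "Vfund a b \<nu> c \<sigma> \<epsilon> = (THE V. V 0 = mat 1 \<and>
      (\<forall>t. (V has_vector_derivative (Mmat a b \<nu> c t \<sigma> \<epsilon> ** V t)) (at t)))"

definition Bmon :: "real \<Rightarrow> real \<Rightarrow> real \<Rightarrow> (real \<Rightarrow> complex) \<Rightarrow>
    complex \<Rightarrow> real \<Rightarrow> complex^2^2" where
  "Bmon a b \<nu> c \<sigma> \<epsilon> = Vfund a b \<nu> c \<sigma> \<epsilon> (2 * pi)"

end

theory Submission
  imports Defs
begin


type_synonym cm = "complex^2^2"

lemma norm_le_sum_vec: "norm (x::'a::real_normed_vector^'n) \<le> (\<Sum>i\<in>UNIV. norm (x$i))"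
  unfolding norm_vec_def by (rule L2_set_le_sum) simp

lemma mm_entry: "((A::cm) ** (B::cm)) $ (i::2) $ (j::2) = A$i$1 * B$1$j + A$i$2 * B$2$j"
  by (simp add: matrix_matrix_mult_def sum_2)

lemma norm_entry: "norm ((A::cm)$(i::2)$(j::2)) \<le> norm A"
proof -
  have "norm (A$i$j) \<le> norm (A$i)" by (rule Finite_Cartesian_Product.norm_nth_le)
  also have "\<dots> \<le> norm A" by (rule Finite_Cartesian_Product.norm_nth_le)
  finally show ?thesis .
qed

lemma norm_mm_entry: "norm (((A::cm) ** (B::cm)) $ (i::2) $ (j::2)) \<le> 2 * norm A * norm B"
proof -
  have "norm ((A ** B :: cm) $ i $ j) \<le> norm (A$i$1) * norm (B$1$j) + norm (A$i$2) * norm (B$2$j)"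
    unfolding mm_entry using norm_triangle_ineq[of "A$i$1 * B$1$j" "A$i$2 * B$2$j"] by (simp add: norm_mult)
  also have "\<dots> \<le> norm A * norm B + norm A * norm B"
    by (intro add_mono mult_mono norm_entry) auto
  finally show ?thesis by simp
qed

lemma norm_le_entries: "norm (A::cm) \<le> (\<Sum>i\<in>UNIV. \<Sum>j\<in>UNIV. norm (A$i$j))"
  by (rule order_trans[OF norm_le_sum_vec]) (intro sum_mono norm_le_sum_vec)

lemma norm_mm: "norm ((A::cm) ** (B::cm)) \<le> 8 * norm A * norm B"
proof -
  have "norm (A ** B) \<le> (\<Sum>i\<in>UNIV. \<Sum>j\<in>UNIV. norm ((A**B)$i$j))" by (rule norm_le_entries)
  also have "\<dots> \<le> (\<Sum>i\<in>(UNIV::2 set). \<Sum>j\<in>(UNIV::2 set). 2 * norm A * norm B)"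
    by (intro sum_mono) (rule norm_mm_entry)
  finally show ?thesis by (simp add: sum_2)
qed

lemma bb_mm: "bounded_bilinear ((**) :: cm \<Rightarrow> cm \<Rightarrow> cm)"
proof
  fix a a' b b' :: cm and r :: real
  have "((a + a') ** b) $ i $ j = (a ** b + a' ** b) $ i $ j" for i j
    by (simp only: mm_entry vector_add_component distrib_right add_ac)
  then show "(a + a') ** b = a ** b + a' ** b" by (simp add: vec_eq_iff)
  have "(a ** (b + b')) $ i $ j = (a ** b + a ** b') $ i $ j" for i j
    by (simp only: mm_entry vector_add_component distrib_left add_ac)
  then show "a ** (b + b') = a ** b + a ** b'" by (simp add: vec_eq_iff)
  have "((r *\<^sub>R a) ** b) $ i $ j = (r *\<^sub>R (a ** b)) $ i $ j" for i j
    by (simp only: mm_entry vector_scaleR_component mult_scaleR_left scaleR_right_distrib)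
  then show "(r *\<^sub>R a) ** b = r *\<^sub>R (a ** b)" by (simp add: vec_eq_iff)
  have "(a ** (r *\<^sub>R b)) $ i $ j = (r *\<^sub>R (a ** b)) $ i $ j" for i j
    by (simp only: mm_entry vector_scaleR_component mult_scaleR_right scaleR_right_distrib)
  then show "a ** (r *\<^sub>R b) = r *\<^sub>R (a ** b)" by (simp add: vec_eq_iff)
  show "\<exists>K. \<forall>(a::cm) (b::cm). norm (a ** b) \<le> norm a * norm b * K"
  proof (rule exI[of _ 8], intro allI)
    fix a b :: cm
    show "norm (a ** b) \<le> norm a * norm b * 8" using norm_mm[of a b] by (simp add: mult_ac)
  qed
qed

lemma antider_exists:
  fixes f :: "real \<Rightarrow> 'a::euclidean_space"
  assumes cf: "continuous_on UNIV f"
  shows "\<exists>F. F 0 = 0 \<and> (\<forall>t. (F has_vector_derivative f t) (at t))"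
proof -
  define G where "G T s = integral {-T..s} f - integral {-T..0} f" for T s
  have int: "f integrable_on {a..b}" for a b
    by (rule integrable_continuous_real) (rule continuous_on_subset[OF cf], simp)
  have indep: "G T s = G T' s" if "T \<le> T'" "-T \<le> s" "-T \<le> 0" for T T' s
  proof -
    have "integral {-T'..-T} f + integral {-T..s} f = integral {-T'..s} f"
      using Henstock_Kurzweil_Integration.integral_combine[where a="-T'" and c="-T" and b=s and f=f] that int by auto
    moreover have "integral {-T'..-T} f + integral {-T..0} f = integral {-T'..0} f"
      using Henstock_Kurzweil_Integration.integral_combine[where a="-T'" and c="-T" and b=0 and f=f] that int by auto
    ultimately show ?thesis unfolding G_def by (metis add_diff_cancel_left)
  qed
  define F where "F s = G (\<bar>s\<bar>+1) s" for s
  have "(F has_vector_derivative f t) (at t)" for t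
  proof -
    define T where "T = \<bar>t\<bar> + 2"
    have T1: "-T < t" "t < T" unfolding T_def by linarith+
    have "((\<lambda>u. integral {-T..u} f) has_vector_derivative f t) (at t within {-T..T})"
    proof (rule integral_has_vector_derivative)
      show "continuous_on {-T..T} f" by (rule continuous_on_subset[OF cf]) simp
      show "t \<in> {-T..T}" using T1 by simp
    qed
    moreover have "at t within {-T..T} = at t"
      by (rule at_within_Icc_at) (use T1 in simp_all)
    ultimately have "((\<lambda>u. integral {-T..u} f) has_vector_derivative f t) (at t)" by simp
    from has_vector_derivative_diff[OF this has_vector_derivative_const[of "integral {-T..0} f"]]
    have d: "(G T has_vector_derivative f t) (at t)"
      unfolding G_def by simp
    show ?thesis
    proof (rule has_vector_derivative_transform_within_open[OF d, of "{t-1<..<t+1}"])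
      fix y assume y: "y \<in> {t-1<..<t+1}"
      have y1: "t - 1 < y" "y < t + 1" using y by auto
      have a1: "\<bar>y\<bar> + 1 \<le> T" using y1 unfolding T_def by linarith
      have a2: "-(\<bar>y\<bar> + 1) \<le> y" by linarith
      have a3: "-(\<bar>y\<bar> + 1) \<le> 0" by linarith
      show "G T y = F y" unfolding F_def using indep[OF a1 a2 a3] by simp
    qed simp_all
  qed
  moreover have "F 0 = 0" by (simp add: F_def G_def)
  ultimately show ?thesis by blast
qed

lemma antider_unique:
  fixes F :: "real \<Rightarrow> 'a::real_normed_vector"
  assumes "\<And>t. (F has_vector_derivative 0) (at t)"
  shows "F t = F 0"
proof -
  obtain c where "\<And>x. x \<in> UNIV \<Longrightarrow> F x = c"
    using has_vector_derivative_zero_constant[of UNIV F] assms by blast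
  then show ?thesis by simp
qed


lemma vseries_deriv:
  fixes f :: "nat \<Rightarrow> real \<Rightarrow> 'a::banach"
  assumes der: "\<And>n t. (f n has_vector_derivative f' n t) (at t)"
    and bnd: "\<And>T. \<exists>M. summable M \<and> (\<forall>n t. \<bar>t\<bar> \<le> T \<longrightarrow> norm (f' n t) \<le> M n \<and> norm (f n t) \<le> M n)"
  shows "((\<lambda>t. \<Sum>n. f n t) has_vector_derivative (\<Sum>n. f' n t)) (at t)"
proof -
  define T where "T = \<bar>t\<bar> + 1"
  define S where "S = {-T<..<T}"
  obtain M where M: "summable M" "\<And>n t. \<bar>t\<bar> \<le> T \<Longrightarrow> norm (f' n t) \<le> M n \<and> norm (f n t) \<le> M n"
    using bnd[of T] by blast
  have SM: "x \<in> S \<Longrightarrow> \<bar>x\<bar> \<le> T" for x unfolding S_def by auto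
  have ul: "uniform_limit S (\<lambda>n x. \<Sum>i<n. f' i x) (\<lambda>x. \<Sum>i. f' i x) sequentially"
    by (rule Weierstrass_m_test[OF _ M(1)]) (use M(2) SM in blast)
  have tS: "t \<in> S" unfolding S_def T_def by auto
  have "\<exists>g. \<forall>x\<in>S. (\<lambda>n. f n x) sums (g x) \<and> (g has_derivative (\<lambda>h. h *\<^sub>R (\<Sum>i. f' i x))) (at x within S)"
  proof (rule has_derivative_series[where f'="\<lambda>n x h. h *\<^sub>R f' n x"])
    show "convex S" unfolding S_def by simp
    show "(f n has_derivative (\<lambda>h. h *\<^sub>R f' n x)) (at x within S)" for n x
      using der[of n x] unfolding has_vector_derivative_def by (rule has_derivative_at_withinI)
    show "\<forall>\<^sub>F n in sequentially. \<forall>x\<in>S. \<forall>h. norm ((\<Sum>i<n. h *\<^sub>R f' i x) - h *\<^sub>R (\<Sum>i. f' i x)) \<le> e * norm h"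
      if e: "e > 0" for e
    proof -
      have "\<forall>\<^sub>F n in sequentially. \<forall>x\<in>S. dist (\<Sum>i<n. f' i x) (\<Sum>i. f' i x) < e"
        using uniform_limitD[OF ul e] by simp
      then show ?thesis
      proof (rule eventually_mono)
        fix n assume H: "\<forall>x\<in>S. dist (\<Sum>i<n. f' i x) (\<Sum>i. f' i x) < e"
        show "\<forall>x\<in>S. \<forall>h. norm ((\<Sum>i<n. h *\<^sub>R f' i x) - h *\<^sub>R (\<Sum>i. f' i x)) \<le> e * norm h"
        proof (intro ballI allI)
          fix x h assume x: "x \<in> S"
          have "norm ((\<Sum>i<n. h *\<^sub>R f' i x) - h *\<^sub>R (\<Sum>i. f' i x)) = \<bar>h\<bar> * norm ((\<Sum>i<n. f' i x) - (\<Sum>i. f' i x))"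
            by (simp add: scaleR_sum_right[symmetric] scaleR_diff_right[symmetric])
          also have "\<dots> \<le> \<bar>h\<bar> * e" using H x by (intro mult_left_mono) (auto simp: dist_norm)
          finally show "norm ((\<Sum>i<n. h *\<^sub>R f' i x) - h *\<^sub>R (\<Sum>i. f' i x)) \<le> e * norm h" by (simp add: mult.commute)
        qed
      qed
    qed
    show "t \<in> S" by (fact tS)
    have "summable (\<lambda>n. f n t)"
      by (rule summable_comparison_test'[OF M(1), of 0]) (use M(2)[of t] T_def in auto)
    then show "(\<lambda>n. f n t) sums (\<Sum>n. f n t)" by (simp add: summable_sums)
  qed
  then obtain g where g: "\<And>x. x \<in> S \<Longrightarrow> (\<lambda>n. f n x) sums (g x)"
     "\<And>x. x\<in>S \<Longrightarrow> (g has_derivative (\<lambda>h. h *\<^sub>R (\<Sum>i. f' i x))) (at x within S)" by blast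
  have oS: "open S" unfolding S_def by simp
  have "(g has_vector_derivative (\<Sum>i. f' i t)) (at t)"
    using g(2)[OF tS] at_within_open[OF tS oS] unfolding has_vector_derivative_def by simp
  then show ?thesis
    by (rule has_vector_derivative_transform_within_open[OF _ oS tS]) (use g(1) sums_unique in metis)
qed

definition antider :: "(real \<Rightarrow> cm) \<Rightarrow> real \<Rightarrow> cm" where
  "antider f = (SOME F. F 0 = 0 \<and> (\<forall>t. (F has_vector_derivative f t) (at t)))"

lemma antider:
  assumes "continuous_on UNIV f"
  shows "antider f 0 = 0 \<and> (\<forall>t. (antider f has_vector_derivative f t) (at t))"
  unfolding antider_def
  by (rule someI_ex[where P="\<lambda>F. F 0 = 0 \<and> (\<forall>t. (F has_vector_derivative f t) (at t))"])
     (rule antider_exists[OF assms])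

primrec Q :: "(real \<Rightarrow> cm) \<Rightarrow> nat \<Rightarrow> real \<Rightarrow> cm" where
  "Q A 0 = (\<lambda>t. mat 1)"
| "Q A (Suc n) = antider (\<lambda>s. A s ** Q A n s)"

lemma deriv_cont:
  assumes "\<And>t. (F has_vector_derivative F' t) (at t)"
  shows "continuous_on UNIV F"
  by (rule continuous_at_imp_continuous_on) (use assms has_vector_derivative_continuous in blast)

lemma Q_props:
  assumes cA: "continuous_on UNIV A"
  shows "continuous_on UNIV (Q A n) \<and> (\<forall>t. (Q A (Suc n) has_vector_derivative A t ** Q A n t) (at t))
         \<and> Q A (Suc n) 0 = 0"
proof (induction n)
  case 0
  have c: "continuous_on UNIV (\<lambda>s. A s ** Q A 0 s)"
    by (rule bounded_bilinear.continuous_on[OF bb_mm cA]) simp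
  show ?case using antider[OF c] by simp
next
  case (Suc n)
  then have cQ: "continuous_on UNIV (Q A (Suc n))" by (intro deriv_cont) blast
  have c: "continuous_on UNIV (\<lambda>s. A s ** Q A (Suc n) s)"
    by (rule bounded_bilinear.continuous_on[OF bb_mm cA cQ])
  show ?case using antider[OF c] cQ by simp
qed

lemma pow_fact_deriv:
  "((\<lambda>s::real. s ^ Suc n / fact (Suc n)) has_real_derivative s ^ n / fact n) (at s)"
proof -
  have "((\<lambda>s::real. s ^ Suc n / fact (Suc n)) has_real_derivative (real (Suc n) * s ^ n) / fact (Suc n)) (at s)"
    by (intro derivative_eq_intros) auto
  moreover have "(real (Suc n) * s ^ n) / fact (Suc n) = s ^ n / fact n"
    by (simp add: fact_Suc del: of_nat_Suc)
  ultimately show ?thesis by simp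
qed

lemma Q_bound:
  assumes cA: "continuous_on UNIV A" and L: "0 \<le> L" and AL: "\<And>s. \<bar>s\<bar> \<le> T \<Longrightarrow> norm (A s) \<le> L"
  shows "\<bar>t\<bar> \<le> T \<Longrightarrow> norm (Q A n t) \<le> norm (mat 1 :: cm) * (8 * L * \<bar>t\<bar>) ^ n / fact n"
proof (induction n arbitrary: t)
  case 0
  then show ?case by simp
next
  case (Suc n)
  define C where "C = norm (mat 1 :: cm)"
  define K where "K = 8 * L"
  have K0: "0 \<le> K" using L K_def by simp
  have C0: "0 \<le> C" unfolding C_def by simp
  note P = Q_props[OF cA]
  have der: "\<And>s. (Q A (Suc n) has_vector_derivative A s ** Q A n s) (at s)" using P by blast
  have cont: "continuous_on UNIV (Q A (Suc n))" using P by blast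
  have z: "Q A (Suc n) 0 = 0" using P by blast
  have bd: "norm (A s ** Q A n s) \<le> C * K ^ Suc n * \<bar>s\<bar> ^ n / fact n" if "\<bar>s\<bar> \<le> T" for s
  proof -
    have "norm (A s ** Q A n s) \<le> 8 * norm (A s) * norm (Q A n s)" by (rule norm_mm)
    also have "\<dots> \<le> 8 * L * (C * (K * \<bar>s\<bar>) ^ n / fact n)"
      using Suc.IH[OF that] AL[OF that] L unfolding C_def K_def
      by (intro mult_mono) auto
    also have "\<dots> = C * K ^ Suc n * \<bar>s\<bar> ^ n / fact n"
      unfolding K_def by (simp add: power_mult_distrib)
    finally show ?thesis .
  qed
  show ?case
  proof (cases "t = 0")
    case True
    then show ?thesis using z by simp
  next
    case False
    show ?thesis
    proof (cases "t > 0")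
      case True
      define \<phi> where "\<phi> s = C * K ^ Suc n * (s ^ Suc n / fact (Suc n))" for s :: real
      have "norm (Q A (Suc n) t - Q A (Suc n) 0) \<le> \<phi> t - \<phi> 0"
      proof (rule differentiable_bound_general[OF True])
        show "continuous_on {0..t} (Q A (Suc n))" by (rule continuous_on_subset[OF cont]) simp
        show "continuous_on {0..t} \<phi>" unfolding \<phi>_def by (intro continuous_intros) simp
        show "(Q A (Suc n) has_vector_derivative A s ** Q A n s) (at s)" for s by (rule der)
        show "(\<phi> has_vector_derivative C * K ^ Suc n * (s ^ n / fact n)) (at s)" for s
          unfolding \<phi>_def has_real_derivative_iff_has_vector_derivative[symmetric]
          by (intro DERIV_cmult pow_fact_deriv)
        show "norm (A s ** Q A n s) \<le> C * K ^ Suc n * (s ^ n / fact n)" if "0 < s" "s < t" for s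
          using bd[of s] that Suc.prems by auto
      qed
      then show ?thesis using True z unfolding \<phi>_def C_def K_def
        by (simp add: power_mult_distrib mult_ac)
    next
      case False
      with \<open>t \<noteq> 0\<close> have tn: "t < 0" by simp
      define \<phi> where "\<phi> s = - (C * K ^ Suc n * ((-s) ^ Suc n / fact (Suc n)))" for s :: real
      have "norm (Q A (Suc n) 0 - Q A (Suc n) t) \<le> \<phi> 0 - \<phi> t"
      proof (rule differentiable_bound_general[OF tn])
        show "continuous_on {t..0} (Q A (Suc n))" by (rule continuous_on_subset[OF cont]) simp
        show "continuous_on {t..0} \<phi>" unfolding \<phi>_def by (intro continuous_intros) simp
        show "(Q A (Suc n) has_vector_derivative A s ** Q A n s) (at s)" for s by (rule der)
        show "(\<phi> has_vector_derivative C * K ^ Suc n * ((-s) ^ n / fact n)) (at s)" for s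
        proof -
          have "((\<lambda>s. (-s) ^ Suc n / fact (Suc n)) has_real_derivative (real (Suc n) * (-s) ^ n * (-1)) / fact (Suc n)) (at s)"
            by (intro derivative_eq_intros) auto
          moreover have "(real (Suc n) * (-s) ^ n * (-1)) / fact (Suc n) = ((-s) ^ n / fact n) * (-1)"
            by (simp add: fact_Suc del: of_nat_Suc)
          ultimately have "((\<lambda>s. (-s) ^ Suc n / fact (Suc n)) has_real_derivative ((-s) ^ n / fact n) * (-1)) (at s)"
            by simp
          then have "(\<phi> has_real_derivative - (C * K ^ Suc n * (((-s) ^ n / fact n) * (-1)))) (at s)"
            unfolding \<phi>_def by (intro DERIV_minus DERIV_cmult)
          then show ?thesis unfolding has_real_derivative_iff_has_vector_derivative by simp
        qed
        show "norm (A s ** Q A n s) \<le> C * K ^ Suc n * ((-s) ^ n / fact n)" if "t < s" "s < 0" for s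
          using bd[of s] that Suc.prems by auto
      qed
      moreover have "\<phi> 0 - \<phi> t = C * (K * \<bar>t\<bar>) ^ Suc n / fact (Suc n)"
      proof -
        have "\<bar>t\<bar> = -t" using tn by simp
        then have "(K * \<bar>t\<bar>) ^ Suc n = K ^ Suc n * (-t) ^ Suc n" by (subst \<open>\<bar>t\<bar> = -t\<close>) (rule power_mult_distrib)
        then show ?thesis unfolding \<phi>_def by simp
      qed
      ultimately show ?thesis using z unfolding C_def K_def by simp
    qed
  qed
qed


lemma A_bound:
  assumes cA: "continuous_on UNIV (A :: real \<Rightarrow> 'a::real_normed_vector)"
  shows "\<exists>L. 0 \<le> L \<and> (\<forall>s. \<bar>s\<bar> \<le> T \<longrightarrow> norm (A s) \<le> L)"
proof -
  have "compact (A ` {-T..T})"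
    by (rule compact_continuous_image[OF continuous_on_subset[OF cA]]) auto
  then have "bounded (A ` {-T..T})" by (rule compact_imp_bounded)
  then obtain b where b: "b > 0" "\<And>x. x \<in> A ` {-T..T} \<Longrightarrow> norm x \<le> b"
    unfolding bounded_pos by blast
  have "norm (A s) \<le> b" if "\<bar>s\<bar> \<le> T" for s
  proof -
    have "s \<in> {-T..T}" using that by (simp add: abs_le_iff)
    then show ?thesis using b(2)[of "A s"] by blast
  qed
  then show ?thesis using b(1) by (intro exI[of _ b]) auto
qed

lemma summable_expC: "summable (\<lambda>n. C * x ^ n / fact n :: real)"
proof -
  have "summable (\<lambda>n. C * (inverse (fact n) * x ^ n) :: real)"
    by (intro summable_mult summable_exp)
  then show ?thesis by (simp add: field_simps)
qed

lemma Q_M: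
  assumes cA: "continuous_on UNIV A"
  obtains L M where "0 \<le> L" "\<And>s. \<bar>s\<bar> \<le> T \<Longrightarrow> norm (A s) \<le> L"
    "M = (\<lambda>n. norm (mat 1 :: cm) * (8 * L * \<bar>T\<bar>) ^ n / fact n)" "summable M"
    "\<And>n t. \<bar>t\<bar> \<le> T \<Longrightarrow> norm (Q A n t) \<le> M n"
proof -
  obtain L where L: "0 \<le> L" "\<And>s. \<bar>s\<bar> \<le> T \<Longrightarrow> norm (A s) \<le> L"
    using A_bound[OF cA, of T] by blast
  define M where "M = (\<lambda>n. norm (mat 1 :: cm) * (8 * L * \<bar>T\<bar>) ^ n / fact n)"
  have "norm (Q A n t) \<le> M n" if "\<bar>t\<bar> \<le> T" for n t
  proof -
    have "norm (Q A n t) \<le> norm (mat 1 :: cm) * (8 * L * \<bar>t\<bar>) ^ n / fact n"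
      by (rule Q_bound[OF cA L that])
    also have "\<dots> \<le> M n" unfolding M_def
    proof -
      have "8 * L * \<bar>t\<bar> \<le> 8 * L * \<bar>T\<bar>" using that L(1) by (intro mult_left_mono) auto
      then have "(8 * L * \<bar>t\<bar>) ^ n \<le> (8 * L * \<bar>T\<bar>) ^ n" using L(1) by (intro power_mono) auto
      then show "norm (mat 1 :: cm) * (8 * L * \<bar>t\<bar>) ^ n / fact n \<le> norm (mat 1 :: cm) * (8 * L * \<bar>T\<bar>) ^ n / fact n"
        by (intro divide_right_mono mult_left_mono) auto
    qed
    finally show ?thesis .
  qed
  moreover have "summable M" unfolding M_def by (rule summable_expC)
  ultimately show ?thesis by (intro that[OF L(1) L(2) M_def]) auto
qed

definition Ysol :: "(real \<Rightarrow> cm) \<Rightarrow> real \<Rightarrow> cm" where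
  "Ysol A t = (\<Sum>n. Q A n t)"

lemma Q_summable:
  assumes cA: "continuous_on UNIV A"
  shows "summable (\<lambda>n. Q A n t)"
proof -
  obtain L M where "0 \<le> L" "\<And>s. \<bar>s\<bar> \<le> \<bar>t\<bar> \<Longrightarrow> norm (A s) \<le> L"
    "M = (\<lambda>n. norm (mat 1 :: cm) * (8 * L * \<bar>\<bar>t\<bar>\<bar>) ^ n / fact n)" and sM: "summable M"
    and b: "\<And>n t'. \<bar>t'\<bar> \<le> \<bar>t\<bar> \<Longrightarrow> norm (Q A n t') \<le> M n"
    by (rule Q_M[OF cA, of "\<bar>t\<bar>"]) blast
  have "norm (Q A n t) \<le> M n" for n by (rule b) simp
  then show ?thesis by (rule summable_comparison_test'[OF sM])
qed

lemma Ysol: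
  assumes cA: "continuous_on UNIV A"
  shows "Ysol A 0 = mat 1" "(Ysol A has_vector_derivative A t ** Ysol A t) (at t)"
proof -
  note P = Q_props[OF cA]
  have "Ysol A 0 = (\<Sum>n\<in>{0}. Q A n 0)" unfolding Ysol_def
  proof (rule suminf_finite)
    fix n :: nat assume "n \<notin> {0}"
    then obtain m where "n = Suc m" by (cases n) auto
    then show "Q A n 0 = 0" using P by blast
  qed simp
  then show "Ysol A 0 = mat 1" by simp
  define f' where "f' n t = (case n of 0 \<Rightarrow> 0 | Suc m \<Rightarrow> A t ** Q A m t)" for n t
  have der: "(Q A n has_vector_derivative f' n t) (at t)" for n t
  proof (cases n)
    case 0 then show ?thesis by (simp add: f'_def)
  next
    case (Suc m) then show ?thesis using P by (simp add: f'_def)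
  qed
  have bnd: "\<exists>M. summable M \<and> (\<forall>n t. \<bar>t\<bar> \<le> T \<longrightarrow> norm (f' n t) \<le> M n \<and> norm (Q A n t) \<le> M n)" for T
  proof -
    obtain L M where L: "0 \<le> L" "\<And>s. \<bar>s\<bar> \<le> T \<Longrightarrow> norm (A s) \<le> L" and sM: "summable M"
      and QM: "\<And>n t. \<bar>t\<bar> \<le> T \<Longrightarrow> norm (Q A n t) \<le> M n" and M0: "\<And>n. 0 \<le> M n"
    proof -
      obtain L M where "0 \<le> L" "\<And>s. \<bar>s\<bar> \<le> T \<Longrightarrow> norm (A s) \<le> L"
        "M = (\<lambda>n. norm (mat 1 :: cm) * (8 * L * \<bar>T\<bar>) ^ n / fact n)" "summable M"
        "\<And>n t. \<bar>t\<bar> \<le> T \<Longrightarrow> norm (Q A n t) \<le> M n"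
        by (rule Q_M[OF cA, of T]) blast
      moreover have "\<And>n. 0 \<le> M n" using calculation(1,3) by simp
      ultimately show ?thesis using that by blast
    qed
    define M' where "M' n = M n + (case n of 0 \<Rightarrow> 0 | Suc m \<Rightarrow> 8 * L * M m)" for n
    have "summable (\<lambda>n. case n of 0 \<Rightarrow> 0 | Suc m \<Rightarrow> 8 * L * M m)"
      by (subst summable_Suc_iff[symmetric]) (simp add: summable_mult sM)
    then have "summable M'" unfolding M'_def by (intro summable_add sM)
    moreover have "norm (f' n t) \<le> M' n \<and> norm (Q A n t) \<le> M' n" if "\<bar>t\<bar> \<le> T" for n t
    proof (cases n)
      case 0 then show ?thesis using QM[OF that, of 0] M0[of 0] by (simp add: f'_def M'_def)
    next
      case (Suc m)
      have "norm (A t ** Q A m t) \<le> 8 * norm (A t) * norm (Q A m t)" by (rule norm_mm)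
      also have "\<dots> \<le> 8 * L * M m" using L(2)[OF that] QM[OF that] L(1)
        by (intro mult_mono) auto
      finally have h1: "norm (A t ** Q A m t) \<le> 8 * L * M m" .
      have h2: "norm (Q A n t) \<le> M n" by (rule QM[OF that])
      have h3: "0 \<le> 8 * L * M m" using M0[of m] L(1) by simp
      have "M' n = M n + 8 * L * M m" using Suc by (simp add: M'_def)
      moreover have "f' n t = A t ** Q A m t" using Suc by (simp add: f'_def)
      ultimately show ?thesis using h1 h2 h3 M0[of n] by simp
    qed
    ultimately show ?thesis by blast
  qed
  have "((\<lambda>t. \<Sum>n. Q A n t) has_vector_derivative (\<Sum>n. f' n t)) (at t)"
    by (rule vseries_deriv[OF der bnd])
  moreover have "(\<Sum>n. f' n t) = A t ** Ysol A t"
  proof -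
    have sQ: "summable (\<lambda>n. Q A n t)" by (rule Q_summable[OF cA])
    have bl: "bounded_linear (\<lambda>X::cm. A t ** X)" by (rule bounded_bilinear.bounded_linear_right[OF bb_mm])
    have s1: "summable (\<lambda>n. A t ** Q A n t)" by (rule bounded_linear.summable[OF bl sQ])
    have "summable (\<lambda>n. f' (Suc n) t)" using s1 by (simp add: f'_def)
    then have sf: "summable (\<lambda>n. f' n t)" by (subst summable_Suc_iff[symmetric])
    have "(\<Sum>n. f' (Suc n) t) = (\<Sum>n. f' n t) - f' 0 t" by (rule suminf_split_head[OF sf])
    then have "(\<Sum>n. f' n t) = (\<Sum>n. A t ** Q A n t)" by (simp add: f'_def)
    also have "\<dots> = A t ** Ysol A t" unfolding Ysol_def
      by (rule bounded_linear.suminf[OF bl sQ, symmetric])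
    finally show ?thesis .
  qed
  ultimately show "(Ysol A has_vector_derivative A t ** Ysol A t) (at t)"
    unfolding Ysol_def[abs_def] by simp
qed


lemma two_neq [simp]: "(1::2) \<noteq> 2" "(2::2) \<noteq> 1" by simp_all

lemma cm_eq: "(A::cm) = B \<longleftrightarrow> A$1$1 = B$1$1 \<and> A$1$2 = B$1$2 \<and> A$2$1 = B$2$1 \<and> A$2$2 = B$2$2"
  by (auto simp: vec_eq_iff forall_2)

definition Emb :: "2 \<Rightarrow> 2 \<Rightarrow> complex \<Rightarrow> cm" where
  "Emb i j z = (\<chi> k l. if k = i \<and> l = j then z else 0)"

lemma Emb_entry [simp]: "Emb i j z $ k $ l = (if k = i \<and> l = j then z else 0)"
  by (simp add: Emb_def)

lemma bl_Emb: "bounded_linear (Emb i j)"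
proof (rule bounded_linear_intro[where K=1])
  show "Emb i j (x + y) = Emb i j x + Emb i j y" for x y by (simp add: vec_eq_iff)
  show "Emb i j (r *\<^sub>R x) = r *\<^sub>R Emb i j x" for r x by (simp add: vec_eq_iff)
  show "norm (Emb i j x) \<le> norm x * 1" for x
  proof -
    have "norm (Emb i j x) \<le> (\<Sum>k\<in>UNIV. \<Sum>l\<in>UNIV. norm (Emb i j x $ k $ l))" by (rule norm_le_entries)
    also have "\<dots> = norm x" using exhaust_2[of i] exhaust_2[of j] by (auto simp: sum_2)
    finally show ?thesis by simp
  qed
qed

lemma bl_entry: "bounded_linear (\<lambda>X::cm. X $ i $ j)"
  by (rule bounded_linear_compose[OF bounded_linear_vec_nth bounded_linear_vec_nth])

lemma bl_Emb_entry: "bounded_linear f \<Longrightarrow> bounded_linear (\<lambda>X::cm. Emb i j (f (X $ k $ l)))"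
  by (intro bounded_linear_compose[OF bl_Emb] bounded_linear_compose[OF _ bl_entry])

definition adj2 :: "cm \<Rightarrow> cm" where
  "adj2 X = Emb 1 1 (X$2$2) + Emb 1 2 (-X$1$2) + Emb 2 1 (-X$2$1) + Emb 2 2 (X$1$1)"

definition swc :: "cm \<Rightarrow> cm" where
  "swc X = Emb 1 1 (cnj (X$2$2)) + Emb 1 2 (cnj (X$2$1)) + Emb 2 1 (cnj (X$1$2)) + Emb 2 2 (cnj (X$1$1))"

definition det2 :: "cm \<Rightarrow> complex" where
  "det2 X = X$1$1 * X$2$2 - X$1$2 * X$2$1"

lemma adj2_entries [simp]:
  "adj2 X $ 1 $ 1 = X$2$2" "adj2 X $ 1 $ 2 = - X$1$2" "adj2 X $ 2 $ 1 = - X$2$1" "adj2 X $ 2 $ 2 = X$1$1"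
  by (simp_all add: adj2_def)

lemma swc_entries [simp]:
  "swc X $ 1 $ 1 = cnj (X$2$2)" "swc X $ 1 $ 2 = cnj (X$2$1)" "swc X $ 2 $ 1 = cnj (X$1$2)" "swc X $ 2 $ 2 = cnj (X$1$1)"
  by (simp_all add: swc_def)

lemma mat_entries [simp]:
  "(mat c :: cm) $ 1 $ 1 = c" "(mat c :: cm) $ 1 $ 2 = 0" "(mat c :: cm) $ 2 $ 1 = 0" "(mat c :: cm) $ 2 $ 2 = c"
  by (simp_all add: mat_def)

lemma mm_entries [simp]:
  "((A::cm) ** (B::cm)) $ 1 $ 1 = A$1$1 * B$1$1 + A$1$2 * B$2$1"
  "((A::cm) ** (B::cm)) $ 1 $ 2 = A$1$1 * B$1$2 + A$1$2 * B$2$2"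
  "((A::cm) ** (B::cm)) $ 2 $ 1 = A$2$1 * B$1$1 + A$2$2 * B$2$1"
  "((A::cm) ** (B::cm)) $ 2 $ 2 = A$2$1 * B$1$2 + A$2$2 * B$2$2"
  by (simp_all add: mm_entry)

lemma trace_cm: "trace (X::cm) = X$1$1 + X$2$2"
  by (simp add: trace_def sum_2)

lemma bl_adj2: "bounded_linear adj2"
  unfolding adj2_def[abs_def]
  by (intro bounded_linear_add bl_Emb_entry bounded_linear_ident bounded_linear_minus)

lemma bl_swc: "bounded_linear swc"
  unfolding swc_def[abs_def]
  by (intro bounded_linear_add bl_Emb_entry bounded_linear_cnj)

lemma bl_trace: "bounded_linear (trace :: cm \<Rightarrow> complex)"
  unfolding trace_cm[abs_def] by (intro bounded_linear_add bl_entry)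

lemma adj2_mult_left: "adj2 X ** X = mat (det2 X)"
  by (simp add: cm_eq det2_def algebra_simps)

lemma adj2_mult_right: "X ** adj2 X = mat (det2 X)"
  by (simp add: cm_eq det2_def algebra_simps)

lemma adj2_mm: "adj2 (A ** B) = adj2 B ** adj2 A"
  by (simp add: cm_eq algebra_simps)

lemma adj2_tr0: "trace A = 0 \<Longrightarrow> adj2 A = - A"
  by (simp add: cm_eq trace_cm add_eq_0_iff)

lemma adj2_one [simp]: "adj2 (mat 1) = mat 1"
  by (simp add: cm_eq)

lemma mm_uminus_left [simp]: "(- (A::cm)) ** (B::cm) = - (A ** B)"
  by (simp add: cm_eq)

lemma mm_uminus_right [simp]: "(A::cm) ** (- (B::cm)) = - (A ** B)"
  by (simp add: cm_eq)

lemma vd_mm: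
  fixes F G :: "real \<Rightarrow> cm"
  assumes "(F has_vector_derivative F') (at t)" "(G has_vector_derivative G') (at t)"
  shows "((\<lambda>t. F t ** G t) has_vector_derivative (F t ** G' + F' ** G t)) (at t)"
  by (rule bounded_bilinear.has_vector_derivative[OF bb_mm assms])

lemma uniq:
  fixes A Y Z :: "real \<Rightarrow> cm"
  assumes tr: "\<And>t. trace (A t) = 0"
    and Y0: "Y 0 = mat 1" and Yd: "\<And>t. (Y has_vector_derivative A t ** Y t) (at t)"
    and Zd: "\<And>t. (Z has_vector_derivative A t ** Z t) (at t)"
  shows "adj2 (Y t) ** Z t = Z 0"
proof -
  have "((\<lambda>t. adj2 (Y t) ** Z t) has_vector_derivative 0) (at s)" for s
  proof -
    have dA: "((\<lambda>t. adj2 (Y t)) has_vector_derivative adj2 (A s ** Y s)) (at s)"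
      by (rule bounded_linear.has_vector_derivative[OF bl_adj2 Yd])
    have "((\<lambda>t. adj2 (Y t) ** Z t) has_vector_derivative
        (adj2 (Y s) ** (A s ** Z s) + adj2 (A s ** Y s) ** Z s)) (at s)"
      by (rule vd_mm[OF dA Zd])
    moreover have "adj2 (Y s) ** (A s ** Z s) + adj2 (A s ** Y s) ** Z s = 0"
      unfolding adj2_mm adj2_tr0[OF tr]
      by (simp add: matrix_mul_assoc)
    ultimately show ?thesis by simp
  qed
  then have "adj2 (Y t) ** Z t = adj2 (Y 0) ** Z 0" by (rule antider_unique)
  then show ?thesis using Y0 by simp
qed

lemma sol_inv:
  fixes A Y Z :: "real \<Rightarrow> cm"
  assumes tr: "\<And>t. trace (A t) = 0"
    and Y0: "Y 0 = mat 1" and Yd: "\<And>t. (Y has_vector_derivative A t ** Y t) (at t)"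
  shows "adj2 (Y t) ** Y t = mat 1" "Y t ** adj2 (Y t) = mat 1" "det2 (Y t) = 1"
proof -
  show 1: "adj2 (Y t) ** Y t = mat 1" using uniq[OF tr Y0 Yd Yd] Y0 by simp
  then have "mat (det2 (Y t)) = (mat 1 :: cm)" by (simp add: adj2_mult_left)
  then show d: "det2 (Y t) = 1" by (simp add: cm_eq)
  show "Y t ** adj2 (Y t) = mat 1" by (simp add: adj2_mult_right d)
qed

lemma sol_unique:
  fixes A Y Z :: "real \<Rightarrow> cm"
  assumes tr: "\<And>t. trace (A t) = 0"
    and Y0: "Y 0 = mat 1" and Yd: "\<And>t. (Y has_vector_derivative A t ** Y t) (at t)"
    and Zd: "\<And>t. (Z has_vector_derivative A t ** Z t) (at t)"
  shows "Z t = Y t ** Z 0"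
proof -
  have "Z t = (Y t ** adj2 (Y t)) ** Z t" using sol_inv(2)[OF tr Y0 Yd] by simp
  also have "\<dots> = Y t ** Z 0" using uniq[OF tr Y0 Yd Zd] by (simp add: matrix_mul_assoc[symmetric])
  finally show ?thesis .
qed

lemma THE_sol:
  fixes A :: "real \<Rightarrow> cm"
  assumes tr: "\<And>t. trace (A t) = 0" and cA: "continuous_on UNIV A"
  shows "(THE V. V 0 = mat 1 \<and> (\<forall>t. (V has_vector_derivative A t ** V t) (at t))) = Ysol A"
proof (rule the_equality)
  show "Ysol A 0 = mat 1 \<and> (\<forall>t. (Ysol A has_vector_derivative A t ** Ysol A t) (at t))"
    using Ysol[OF cA] by blast
next
  fix V assume V: "V 0 = mat 1 \<and> (\<forall>t. (V has_vector_derivative A t ** V t) (at t))"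
  show "V = Ysol A"
  proof
    fix t
    have "V t = Ysol A t ** V 0"
      by (rule sol_unique[OF tr]) (use Ysol[OF cA] V in auto)
    then show "V t = Ysol A t" using V by simp
  qed
qed


lemma lam0: "lam a b 0 = complex_of_real a" by (simp add: lam_def)

abbreviation M0 :: "real \<Rightarrow> real \<Rightarrow> real \<Rightarrow> (real \<Rightarrow> complex) \<Rightarrow> complex \<Rightarrow> real \<Rightarrow> cm" where
  "M0 a b \<nu> c \<sigma> t \<equiv> Mmat a b \<nu> c t \<sigma> 0"

lemma M_entries [simp]:
  "M0 a b \<nu> c \<sigma> t $ 1 $ 1 = \<i> * (\<sigma> - of_real a * of_real \<nu>) / of_real a"
  "M0 a b \<nu> c \<sigma> t $ 1 $ 2 = c t / of_real a"
  "M0 a b \<nu> c \<sigma> t $ 2 $ 1 = cnj (c t) / of_real a"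
  "M0 a b \<nu> c \<sigma> t $ 2 $ 2 = - \<i> * (\<sigma> - of_real a * of_real \<nu>) / of_real a"
  by (simp_all add: Mmat_def Let_def lam0)

lemma M_trace: "trace (M0 a b \<nu> c \<sigma> t) = 0"
  by (cases "a = 0") (simp_all add: trace_cm field_simps)

definition Kd :: "real \<Rightarrow> cm" where
  "Kd a = Emb 1 1 (\<i> / of_real a) + Emb 2 2 (- \<i> / of_real a)"

lemma Kd_entries [simp]:
  "Kd a $ 1 $ 1 = \<i> / of_real a" "Kd a $ 1 $ 2 = 0" "Kd a $ 2 $ 1 = 0" "Kd a $ 2 $ 2 = - \<i> / of_real a"
  by (simp_all add: Kd_def)

lemma M_shift: "a \<noteq> 0 \<Longrightarrow> M0 a b \<nu> c (\<sigma> + h) t = M0 a b \<nu> c \<sigma> t + mat h ** Kd a"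
  by (simp add: cm_eq field_simps)

lemma swc_mm: "swc ((A::cm) ** (B::cm)) = swc A ** swc B"
  by (simp add: cm_eq)

lemma swc_one [simp]: "swc (mat 1) = mat 1"
  by (simp add: cm_eq)

lemma swc_adj2: "swc (adj2 X) = adj2 (swc X)"
  by (simp add: cm_eq)

lemma swc_Kd: "swc (Kd a) = Kd a"
  by (simp add: cm_eq)

lemma M_swc: "swc (M0 a b \<nu> c (complex_of_real \<tau>) t) = M0 a b \<nu> c (complex_of_real \<tau>) t"
  by (simp add: cm_eq)

lemma cont_Emb: "continuous_on S f \<Longrightarrow> continuous_on S (\<lambda>t. Emb i j (f t))"
  by (rule bounded_linear.continuous_on[OF bl_Emb])

lemma M_cont:
  assumes "continuous_on UNIV c" and a0: "a \<noteq> 0"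
  shows "continuous_on UNIV (M0 a b \<nu> c \<sigma>)"
proof -
  have "M0 a b \<nu> c \<sigma> t = Emb 1 1 (\<i> * (\<sigma> - of_real a * of_real \<nu>) / of_real a) + Emb 1 2 (c t / of_real a)
        + Emb 2 1 (cnj (c t) / of_real a) + Emb 2 2 (- \<i> * (\<sigma> - of_real a * of_real \<nu>) / of_real a)" for t
    by (simp add: cm_eq)
  then have e: "M0 a b \<nu> c \<sigma> = (\<lambda>t. Emb 1 1 (\<i> * (\<sigma> - of_real a * of_real \<nu>) / of_real a) + Emb 1 2 (c t / of_real a)
        + Emb 2 1 (cnj (c t) / of_real a) + Emb 2 2 (- \<i> * (\<sigma> - of_real a * of_real \<nu>) / of_real a))"
    by (rule ext)
  show ?thesis unfolding e
    by (intro continuous_intros cont_Emb assms) (use a0 in auto)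
qed


lemma mm_add_left: "((A::cm) + B) ** (C::cm) = A ** C + B ** C"
  by (rule bounded_bilinear.add_left[OF bb_mm])

lemma mm_diff_right: "(A::cm) ** ((B::cm) - C) = A ** B - A ** C"
  by (rule bounded_bilinear.diff_right[OF bb_mm])

lemma cont_mm: "continuous_on S (F::real \<Rightarrow> cm) \<Longrightarrow> continuous_on S (G::real \<Rightarrow> cm) \<Longrightarrow> continuous_on S (\<lambda>t. F t ** G t)"
  by (rule bounded_bilinear.continuous_on[OF bb_mm])

lemma vd_const_mm:
  fixes F :: "real \<Rightarrow> cm" and C :: cm
  assumes "(F has_vector_derivative F') (at t)"
  shows "((\<lambda>t. C ** F t) has_vector_derivative C ** F') (at t)"
  by (rule bounded_linear.has_vector_derivative[OF bounded_bilinear.bounded_linear_right[OF bb_mm] assms])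

context
  fixes a b \<nu> \<tau> :: real and c :: "real \<Rightarrow> complex"
  assumes a0: "a > 0" and cc: "continuous_on UNIV c"
begin

definition Phi :: "real \<Rightarrow> cm" where "Phi = Ysol (M0 a b \<nu> c (complex_of_real \<tau>))"

lemma contM: "continuous_on UNIV (M0 a b \<nu> c \<sigma>)"
  by (rule M_cont[OF cc]) (use a0 in simp)

lemma Vfund_eq: "Vfund a b \<nu> c \<sigma> 0 = Ysol (M0 a b \<nu> c \<sigma>)"
  unfolding Vfund_def by (rule THE_sol[OF M_trace contM])

lemma Phi0: "Phi 0 = mat 1" and Phid: "(Phi has_vector_derivative M0 a b \<nu> c (complex_of_real \<tau>) t ** Phi t) (at t)"
  using Ysol[OF contM] unfolding Phi_def by blast+

lemma Phi_inv: "Phi t ** adj2 (Phi t) = mat 1" "det2 (Phi t) = 1"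
  using sol_inv[OF M_trace Phi0 Phid] by blast+

lemma Phi_swc: "swc (Phi t) = Phi t"
proof -
  have d: "((\<lambda>t. swc (Phi t)) has_vector_derivative M0 a b \<nu> c (complex_of_real \<tau>) t ** swc (Phi t)) (at t)" for t
    using bounded_linear.has_vector_derivative[OF bl_swc Phid[of t]] by (simp add: swc_mm M_swc)
  have "swc (Phi t) = Phi t ** swc (Phi 0)"
    by (rule sol_unique[OF M_trace Phi0 Phid d])
  then show ?thesis by (simp add: Phi0)
qed

lemma Phi_cont: "continuous_on UNIV Phi"
  by (rule deriv_cont) (rule Phid)

definition X1 :: "real \<Rightarrow> cm" where "X1 t = adj2 (Phi t) ** Kd a ** Phi t"

definition Xh :: "complex \<Rightarrow> real \<Rightarrow> cm" where "Xh h t = mat h ** X1 t"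

lemma X1_cont: "continuous_on UNIV X1"
  unfolding X1_def[abs_def]
  by (intro cont_mm Phi_cont continuous_on_const bounded_linear.continuous_on[OF bl_adj2])

lemma Xh_cont: "continuous_on UNIV (Xh h)"
  unfolding Xh_def[abs_def] by (intro cont_mm X1_cont continuous_on_const)

lemma Xh_alt: "Xh h t = adj2 (Phi t) ** (mat h ** Kd a) ** Phi t"
  unfolding Xh_def X1_def by (simp add: cm_eq algebra_simps)

lemma shift_sol: "Ysol (M0 a b \<nu> c (complex_of_real \<tau> + h)) t = Phi t ** Ysol (Xh h) t"
proof -
  define U where "U = Ysol (Xh h)"
  have U0: "U 0 = mat 1" and Ud: "\<And>t. (U has_vector_derivative Xh h t ** U t) (at t)"
    using Ysol[OF Xh_cont] unfolding U_def by blast+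
  have Y0: "Ysol (M0 a b \<nu> c (complex_of_real \<tau> + h)) 0 = mat 1"
   and Yd: "\<And>t. (Ysol (M0 a b \<nu> c (complex_of_real \<tau> + h)) has_vector_derivative
             M0 a b \<nu> c (complex_of_real \<tau> + h) t ** Ysol (M0 a b \<nu> c (complex_of_real \<tau> + h)) t) (at t)"
    using Ysol[OF contM] by blast+
  have Wd: "((\<lambda>t. Phi t ** U t) has_vector_derivative M0 a b \<nu> c (complex_of_real \<tau> + h) t ** (Phi t ** U t)) (at t)" for t
  proof -
    have "((\<lambda>t. Phi t ** U t) has_vector_derivative
        Phi t ** (Xh h t ** U t) + (M0 a b \<nu> c (complex_of_real \<tau>) t ** Phi t) ** U t) (at t)"
      by (rule vd_mm[OF Phid Ud])
    moreover have "Phi t ** (Xh h t ** U t) + (M0 a b \<nu> c (complex_of_real \<tau>) t ** Phi t) ** U t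
        = M0 a b \<nu> c (complex_of_real \<tau> + h) t ** (Phi t ** U t)"
    proof -
      have "Phi t ** (Xh h t ** U t) = (mat h ** Kd a) ** (Phi t ** U t)"
        unfolding Xh_alt by (simp add: matrix_mul_assoc Phi_inv)
      moreover have "M0 a b \<nu> c (complex_of_real \<tau> + h) t = M0 a b \<nu> c (complex_of_real \<tau>) t + mat h ** Kd a"
        by (rule M_shift) (use a0 in simp)
      ultimately show ?thesis by (simp add: mm_add_left matrix_mul_assoc add_ac)
    qed
    ultimately show ?thesis by simp
  qed
  have "Phi t ** U t = Ysol (M0 a b \<nu> c (complex_of_real \<tau> + h)) t ** (Phi 0 ** U 0)"
    by (rule sol_unique[OF M_trace Y0 Yd Wd])
  then show ?thesis using Phi0 U0 unfolding U_def by simp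
qed

lemma Q_scale: "Q (Xh h) n t = mat (h ^ n) ** Q X1 n t"
proof (induction n arbitrary: t)
  case 0 then show ?case by simp
next
  case (Suc n)
  note P1 = Q_props[OF Xh_cont[of h]] and P2 = Q_props[OF X1_cont]
  define F where "F t = Q (Xh h) (Suc n) t - mat (h ^ Suc n) ** Q X1 (Suc n) t" for t
  have "(F has_vector_derivative 0) (at s)" for s
  proof -
    have d1: "(Q (Xh h) (Suc n) has_vector_derivative Xh h s ** Q (Xh h) n s) (at s)" using P1 by blast
    have d2: "(Q X1 (Suc n) has_vector_derivative X1 s ** Q X1 n s) (at s)" using P2 by blast
    have "(F has_vector_derivative Xh h s ** Q (Xh h) n s - mat (h ^ Suc n) ** (X1 s ** Q X1 n s)) (at s)"
      unfolding F_def[abs_def] by (intro has_vector_derivative_diff d1 vd_const_mm d2)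
    moreover have "Xh h s ** Q (Xh h) n s = mat (h ^ Suc n) ** (X1 s ** Q X1 n s)"
      unfolding Suc.IH Xh_def by (simp add: cm_eq algebra_simps)
    ultimately show ?thesis by simp
  qed
  then have "F t = F 0" by (rule antider_unique)
  moreover have "F 0 = 0" using P1 P2 unfolding F_def by simp
  ultimately show ?case unfolding F_def by simp
qed

end


lemma trace_mat_mm: "trace (mat h ** (X::cm)) = h * trace X"
  by (simp add: trace_cm algebra_simps)

lemma trace_comm: "trace ((A::cm) ** B) = trace (B ** A)"
  by (simp add: trace_cm algebra_simps)

lemma endgame:
  fixes f :: "complex \<Rightarrow> complex"
  assumes fe: "\<And>\<sigma>. f \<sigma> = (\<Sum>n. cf n * (\<sigma> - z) ^ n)" and sm: "\<And>x. summable (\<lambda>n. cf n * x ^ n)"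
  shows "(f has_field_derivative cf 1) (at z)" "deriv (deriv f) z = 2 * cf 2"
proof -
  define g where "g x = (\<Sum>n. cf n * x ^ n)" for x
  define g1 where "g1 x = (\<Sum>n. diffs cf n * x ^ n)" for x
  define g2 where "g2 x = (\<Sum>n. diffs (diffs cf) n * x ^ n)" for x
  have sm1: "summable (\<lambda>n. diffs cf n * x ^ n)" for x by (rule termdiff_converges_all[OF sm])
  have dg: "(g has_field_derivative g1 x) (at x)" for x
    unfolding g_def[abs_def] g1_def by (rule termdiffs_strong_converges_everywhere[OF sm])
  have dg1: "(g1 has_field_derivative g2 x) (at x)" for x
    unfolding g1_def[abs_def] g2_def by (rule termdiffs_strong_converges_everywhere[OF sm1])
  have feq: "f = (\<lambda>\<sigma>. g (\<sigma> - z))" using fe unfolding g_def by auto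
  have df: "(f has_field_derivative g1 (\<sigma> - z)) (at \<sigma>)" for \<sigma>
  proof -
    have "((\<lambda>\<sigma>. g (\<sigma> - z)) has_field_derivative g1 (\<sigma> - z) * 1) (at \<sigma>)"
      by (rule DERIV_chain2[OF dg]) (auto intro!: derivative_eq_intros)
    then show ?thesis unfolding feq by simp
  qed
  have "g1 0 = cf 1" unfolding g1_def by (simp add: diffs_def)
  then show "(f has_field_derivative cf 1) (at z)" using df[of z] by simp
  have dfe: "deriv f = (\<lambda>\<sigma>. g1 (\<sigma> - z))" by (rule ext) (rule DERIV_imp_deriv[OF df])
  have "((\<lambda>\<sigma>. g1 (\<sigma> - z)) has_field_derivative g2 (z - z) * 1) (at z)"
    by (rule DERIV_chain2[OF dg1]) (auto intro!: derivative_eq_intros)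
  then have "deriv (deriv f) z = g2 0" unfolding dfe by (simp add: DERIV_imp_deriv)
  also have "\<dots> = 2 * cf 2" unfolding g2_def by (simp add: diffs_def numeral_2_eq_2)
  finally show "deriv (deriv f) z = 2 * cf 2" .
qed

context
  fixes a b \<nu> \<tau> :: real and c :: "real \<Rightarrow> complex"
  assumes a0: "a > 0" and cc: "continuous_on UNIV c"
    and BI: "Bmon a b \<nu> c (complex_of_real \<tau>) 0 = mat 1"
begin

definition cf :: "nat \<Rightarrow> complex" where "cf n = trace (Q (X1 a b \<nu> \<tau> c) n (2 * pi))"

lemma Phi_2pi: "Phi a b \<nu> \<tau> c (2 * pi) = mat 1"
  using BI unfolding Bmon_def Vfund_eq[OF a0 cc] Phi_def[OF a0 cc] .

lemma trace_series:
  "trace (Bmon a b \<nu> c \<sigma> 0) = (\<Sum>n. cf n * (\<sigma> - complex_of_real \<tau>) ^ n)"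
  "summable (\<lambda>n. cf n * h ^ n)"
proof -
  have tQ: "trace (Q (Xh a b \<nu> \<tau> c h) n (2 * pi)) = cf n * h ^ n" for n h
    unfolding Q_scale[OF a0 cc] trace_mat_mm cf_def by simp
  have sQ: "summable (\<lambda>n. Q (Xh a b \<nu> \<tau> c h) n (2 * pi))" for h by (rule Q_summable[OF Xh_cont[OF a0 cc]])
  have st: "summable (\<lambda>n. trace (Q (Xh a b \<nu> \<tau> c h) n (2 * pi)))" for h
    by (rule bounded_linear.summable[OF bl_trace sQ])
  then show "summable (\<lambda>n. cf n * h ^ n)" unfolding tQ .
  define h where "h = \<sigma> - complex_of_real \<tau>"
  have "\<sigma> = complex_of_real \<tau> + h" unfolding h_def by simp
  then have "Bmon a b \<nu> c \<sigma> 0 = Ysol (Xh a b \<nu> \<tau> c h) (2 * pi)"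
    unfolding Bmon_def Vfund_eq[OF a0 cc] using shift_sol[OF a0 cc] Phi_2pi by simp
  then have "trace (Bmon a b \<nu> c \<sigma> 0) = (\<Sum>n. trace (Q (Xh a b \<nu> \<tau> c h) n (2 * pi)))"
    unfolding Ysol_def by (simp add: bounded_linear.suminf[OF bl_trace sQ])
  then show "trace (Bmon a b \<nu> c \<sigma> 0) = (\<Sum>n. cf n * (\<sigma> - complex_of_real \<tau>) ^ n)"
    unfolding tQ h_def .
qed

end


lemma vd_entry:
  fixes F :: "real \<Rightarrow> cm"
  assumes "(F has_vector_derivative F') (at t)"
  shows "((\<lambda>t. F t $ i $ j) has_vector_derivative F' $ i $ j) (at t)"
  by (rule bounded_linear.has_vector_derivative[OF bl_entry assms])

lemma trace_add: "trace ((A::cm) + B) = trace A + trace B"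
  by (simp add: trace_cm)

context
  fixes a b \<nu> \<tau> :: real and c :: "real \<Rightarrow> complex"
  assumes a0: "a > 0" and cc: "continuous_on UNIV c"
begin

abbreviation "X \<equiv> X1 a b \<nu> \<tau> c"
abbreviation "P \<equiv> Phi a b \<nu> \<tau> c"

lemma QX_props: "continuous_on UNIV (Q X n) \<and> (\<forall>t. (Q X (Suc n) has_vector_derivative X t ** Q X n t) (at t))
         \<and> Q X (Suc n) 0 = 0"
  by (rule Q_props[OF X1_cont[OF a0 cc]])

lemma Q1d: "(Q X 1 has_vector_derivative X t) (at t)" and Q10: "Q X 1 0 = 0"
  using QX_props[of 0] by simp_all

lemma Q2d: "(Q X (Suc 1) has_vector_derivative X t ** Q X 1 t) (at t)" and Q20: "Q X (Suc 1) 0 = 0"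
  using QX_props[of 1] by simp_all

lemma trace_X: "trace (X t) = 0"
proof -
  have "trace (X t) = trace ((P t ** adj2 (P t)) ** Kd a)"
    unfolding X1_def[OF a0 cc] by (metis trace_comm matrix_mul_assoc)
  also have "\<dots> = 0" by (simp add: Phi_inv[OF a0 cc] trace_cm)
  finally show ?thesis .
qed

lemma trQ1: "trace (Q X 1 t) = 0"
proof -
  have "((\<lambda>t. trace (Q X 1 t)) has_vector_derivative 0) (at s)" for s
    using bounded_linear.has_vector_derivative[OF bl_trace Q1d[of s]] by (simp add: trace_X)
  then have "trace (Q X 1 t) = trace (Q X 1 0)" by (rule antider_unique)
  then show ?thesis using Q10[simplified] by (simp add: trace_cm)
qed

lemma trQ2: "trace (Q X (Suc 1) t) = trace (Q X 1 t ** Q X 1 t) / 2"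
proof -
  define F where "F t = trace (Q X (Suc 1) t) - trace (Q X 1 t ** Q X 1 t) / 2" for t
  have "(F has_vector_derivative 0) (at s)" for s
  proof -
    have d1: "((\<lambda>t. trace (Q X (Suc 1) t)) has_vector_derivative trace (X s ** Q X 1 s)) (at s)"
      by (rule bounded_linear.has_vector_derivative[OF bl_trace Q2d])
    have d2: "((\<lambda>t. trace (Q X 1 t ** Q X 1 t)) has_vector_derivative
              trace (Q X 1 s ** X s + X s ** Q X 1 s)) (at s)"
      by (rule bounded_linear.has_vector_derivative[OF bl_trace vd_mm[OF Q1d Q1d]])
    have "(F has_vector_derivative trace (X s ** Q X 1 s) - trace (Q X 1 s ** X s + X s ** Q X 1 s) / 2) (at s)"
      unfolding F_def[abs_def] by (intro has_vector_derivative_diff d1 has_vector_derivative_divide d2)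
    moreover have eq: "trace (X s ** Q X 1 s) - trace (Q X 1 s ** X s + X s ** Q X 1 s) / 2 = 0"
      unfolding trace_add trace_comm[of "Q X 1 s"] by simp
    ultimately show ?thesis by (simp only:)
  qed
  then have "F t = F 0" by (rule antider_unique)
  then show ?thesis unfolding F_def using Q10[simplified] Q20[simplified] by (simp add: trace_cm)
qed

lemma swc_X: "swc (X t) = X t"
  unfolding X1_def[OF a0 cc] by (simp add: swc_mm swc_adj2 swc_Kd Phi_swc[OF a0 cc])

lemma swc_Q1: "swc (Q X 1 t) = Q X 1 t"
proof -
  define F where "F t = swc (Q X 1 t) - Q X 1 t" for t
  have "(F has_vector_derivative 0) (at s)" for s
  proof -
    have "(F has_vector_derivative swc (X s) - X s) (at s)"
      unfolding F_def[abs_def]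
      by (intro has_vector_derivative_diff Q1d bounded_linear.has_vector_derivative[OF bl_swc])
    then show ?thesis by (simp add: swc_X)
  qed
  then have "F t = F 0" by (rule antider_unique)
  then show ?thesis unfolding F_def using Q10[simplified] by (simp add: cm_eq)
qed

end


lemma sq_gap:
  fixes x y N :: real
  assumes x: "0 \<le> x" and y: "0 \<le> y" and d: "x\<^sup>2 - y\<^sup>2 = 1" and xN: "x \<le> N" and yN: "y \<le> N"
  shows "1 / (4 * N\<^sup>2) \<le> (x - y)\<^sup>2"
proof -
  have s: "(x - y) * (x + y) = 1" using d by (simp add: power2_eq_square algebra_simps)
  have xp: "x + y > 0" using s x y by (cases "x + y = 0") auto
  have N0: "N > 0" using xp xN yN by linarith
  have e: "x - y = 1 / (x + y)" using s xp by (simp add: field_simps)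
  have "1 / (2 * N) \<le> 1 / (x + y)" using xp xN yN by (intro divide_left_mono) auto
  then have "1 / (2 * N) \<le> x - y" using e by simp
  then have "(1 / (2 * N))\<^sup>2 \<le> (x - y)\<^sup>2" using N0 by (intro power_mono) auto
  then show ?thesis by (simp add: power2_eq_square field_simps)
qed

context
  fixes a b \<nu> \<tau> :: real and c :: "real \<Rightarrow> complex"
  assumes a0: "a > 0" and cc: "continuous_on UNIV c"
begin

abbreviation "XX \<equiv> X1 a b \<nu> \<tau> c"
abbreviation "PP \<equiv> Phi a b \<nu> \<tau> c"

lemma P_sym: "PP t $ 2 $ 2 = cnj (PP t $ 1 $ 1)" "PP t $ 2 $ 1 = cnj (PP t $ 1 $ 2)"
proof -
  have "swc (PP t) = PP t" by (rule Phi_swc[OF a0 cc])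
  then have "cnj (PP t $ 2 $ 2) = PP t $ 1 $ 1" "cnj (PP t $ 2 $ 1) = PP t $ 1 $ 2"
    by (simp_all add: cm_eq)
  then show "PP t $ 2 $ 2 = cnj (PP t $ 1 $ 1)" "PP t $ 2 $ 1 = cnj (PP t $ 1 $ 2)"
    by (metis complex_cnj_cnj)+
qed

lemma P_det: "(cmod (PP t $ 1 $ 1))\<^sup>2 - (cmod (PP t $ 1 $ 2))\<^sup>2 = 1"
proof -
  have "det2 (PP t) = 1" by (rule Phi_inv(2)[OF a0 cc])
  then have "PP t $ 1 $ 1 * cnj (PP t $ 1 $ 1) - PP t $ 1 $ 2 * cnj (PP t $ 1 $ 2) = 1"
    unfolding det2_def P_sym by simp
  then have "complex_of_real ((cmod (PP t $ 1 $ 1))\<^sup>2 - (cmod (PP t $ 1 $ 2))\<^sup>2) = 1"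
    by (simp only: of_real_diff complex_norm_square)
  then show ?thesis by (metis of_real_eq_1_iff)
qed

lemma X11: "XX t $ 1 $ 1 = \<i> * complex_of_real (((cmod (PP t $ 1 $ 1))\<^sup>2 + (cmod (PP t $ 1 $ 2))\<^sup>2) / a)"
proof -
  have "XX t $ 1 $ 1 = \<i> / of_real a * (PP t $ 1 $ 1 * cnj (PP t $ 1 $ 1) + PP t $ 1 $ 2 * cnj (PP t $ 1 $ 2))"
    unfolding X1_def[OF a0 cc] by (simp add: P_sym algebra_simps)
  then show ?thesis by (simp add: complex_norm_square[symmetric] divide_complex_def)
qed

lemma X12: "cmod (XX t $ 1 $ 2) = 2 * cmod (PP t $ 1 $ 1) * cmod (PP t $ 1 $ 2) / a"
proof -
  have "XX t $ 1 $ 2 = \<i> / of_real a * (2 * cnj (PP t $ 1 $ 1) * PP t $ 1 $ 2)"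
    unfolding X1_def[OF a0 cc] by (simp add: P_sym algebra_simps)
  then show ?thesis using a0 by (simp add: norm_mult norm_divide)
qed

lemma C1_ineq: "cmod (Q XX 1 (2 * pi) $ 1 $ 2) < cmod (Q XX 1 (2 * pi) $ 1 $ 1)"
proof -
  obtain L where L0: "0 \<le> L" and LB: "\<And>s. \<bar>s\<bar> \<le> 2 * pi \<Longrightarrow> norm (PP s) \<le> L"
    using A_bound[OF Phi_cont[OF a0 cc], of "2 * pi"] by blast
  define N where "N = L + 1"
  have N0: "N > 0" using L0 N_def by simp
  define \<delta> where "\<delta> = 1 / (4 * N\<^sup>2 * a)"
  have \<delta>0: "\<delta> > 0" using N0 a0 unfolding \<delta>_def by simp
  define p where "p t = Q XX 1 t $ 1 $ 1" for t
  define q where "q t = Q XX 1 t $ 1 $ 2" for t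
  define \<phi> where "\<phi> t = Im (p t) - \<delta> * t" for t
  have cQ: "continuous_on UNIV (Q XX 1)" using Q_props[OF X1_cont[OF a0 cc], where n=1] by blast
  have cq: "continuous_on UNIV q" unfolding q_def[abs_def]
    by (rule bounded_linear.continuous_on[OF bl_entry cQ])
  have cp: "continuous_on UNIV p" unfolding p_def[abs_def]
    by (rule bounded_linear.continuous_on[OF bl_entry cQ])
  have cphi: "continuous_on UNIV \<phi>" unfolding \<phi>_def[abs_def]
    by (intro continuous_intros bounded_linear.continuous_on[OF bounded_linear_Im cp])
  have dq: "(q has_vector_derivative XX s $ 1 $ 2) (at s)" for s
    unfolding q_def[abs_def] by (rule vd_entry[OF Q1d[OF a0 cc]])
  have dp: "(p has_vector_derivative XX s $ 1 $ 1) (at s)" for s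
    unfolding p_def[abs_def] by (rule vd_entry[OF Q1d[OF a0 cc]])
  have dphi: "(\<phi> has_vector_derivative Im (XX s $ 1 $ 1) - \<delta>) (at s)" for s
  proof -
    have "((\<lambda>t. \<delta> * t) has_real_derivative \<delta>) (at s)"
      using DERIV_cmult_Id[of \<delta> s] by simp
    then have d2: "((\<lambda>t. \<delta> * t) has_vector_derivative \<delta>) (at s)"
      by (simp add: has_real_derivative_iff_has_vector_derivative)
    have d1: "((\<lambda>t. Im (p t)) has_vector_derivative Im (XX s $ 1 $ 1)) (at s)"
      by (rule bounded_linear.has_vector_derivative[OF bounded_linear_Im dp])
    show ?thesis unfolding \<phi>_def[abs_def] by (rule has_vector_derivative_diff[OF d1 d2])
  qed
  have bnd: "norm (XX s $ 1 $ 2) \<le> Im (XX s $ 1 $ 1) - \<delta>" if s: "0 < s" "s < 2 * pi" for s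
  proof -
    define x where "x = cmod (PP s $ 1 $ 1)"
    define y where "y = cmod (PP s $ 1 $ 2)"
    have sB: "\<bar>s\<bar> \<le> 2 * pi" using s by simp
    have xN: "x \<le> N" unfolding x_def N_def using norm_entry[of "PP s" 1 1] LB[OF sB] by simp
    have yN: "y \<le> N" unfolding y_def N_def using norm_entry[of "PP s" 1 2] LB[OF sB] by simp
    have d: "x\<^sup>2 - y\<^sup>2 = 1" unfolding x_def y_def by (rule P_det)
    have g: "1 / (4 * N\<^sup>2) \<le> (x - y)\<^sup>2"
      by (rule sq_gap[OF _ _ d xN yN]) (simp_all add: x_def y_def)
    have e1: "norm (XX s $ 1 $ 2) = 2 * x * y / a" unfolding x_def y_def by (rule X12)
    have e2: "Im (XX s $ 1 $ 1) = (x\<^sup>2 + y\<^sup>2) / a" unfolding x_def y_def X11 by simp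
    have "a * \<delta> = 1 / (4 * N\<^sup>2)" unfolding \<delta>_def using a0 by simp
    then have "2 * x * y + a * \<delta> \<le> x\<^sup>2 + y\<^sup>2" using g by (simp add: power2_eq_square algebra_simps)
    then have "(2 * x * y + a * \<delta>) / a \<le> (x\<^sup>2 + y\<^sup>2) / a" using a0 by (intro divide_right_mono) auto
    then show ?thesis unfolding e1 e2 using a0 by (simp add: add_divide_distrib)
  qed
  have "norm (q (2 * pi) - q 0) \<le> \<phi> (2 * pi) - \<phi> 0"
    by (rule differentiable_bound_general[where f'="\<lambda>s. XX s $ 1 $ 2" and \<phi>'="\<lambda>s. Im (XX s $ 1 $ 1) - \<delta>"])
       (use continuous_on_subset[OF cq] continuous_on_subset[OF cphi] dq dphi bnd in auto)
  moreover have "q 0 = 0" "p 0 = 0" using Q10[OF a0 cc] unfolding q_def p_def by simp_all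
  ultimately have "cmod (q (2 * pi)) \<le> Im (p (2 * pi)) - \<delta> * (2 * pi)" unfolding \<phi>_def by simp
  also have "\<dots> < Im (p (2 * pi))" using \<delta>0 by simp
  also have "\<dots> \<le> cmod (p (2 * pi))" using abs_Im_le_cmod[of "p (2 * pi)"] by linarith
  finally show ?thesis unfolding p_def q_def .
qed

lemma det_C1: "det2 (Q XX 1 (2 * pi)) \<noteq> 0"
proof -
  define C where "C = Q XX 1 (2 * pi)"
  have "swc C = C" unfolding C_def by (rule swc_Q1[OF a0 cc])
  then have s: "C $ 2 $ 2 = cnj (C $ 1 $ 1)" "C $ 2 $ 1 = cnj (C $ 1 $ 2)"
    by (simp_all add: cm_eq)
  have "det2 C = complex_of_real ((cmod (C $ 1 $ 1))\<^sup>2 - (cmod (C $ 1 $ 2))\<^sup>2)"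
    unfolding det2_def s by (simp only: of_real_diff complex_norm_square)
  moreover have "(cmod (C $ 1 $ 2))\<^sup>2 < (cmod (C $ 1 $ 1))\<^sup>2"
    using C1_ineq unfolding C_def by (intro power_strict_mono) auto
  then have "(cmod (C $ 1 $ 1))\<^sup>2 - (cmod (C $ 1 $ 2))\<^sup>2 \<noteq> 0" by linarith
  then have "complex_of_real ((cmod (C $ 1 $ 1))\<^sup>2 - (cmod (C $ 1 $ 2))\<^sup>2) \<noteq> 0"
    by (metis of_real_eq_0_iff)
  ultimately show ?thesis unfolding C_def[symmetric] by simp
qed

end


lemma core:
  fixes a b \<nu> \<tau> :: real and c :: "real \<Rightarrow> complex"
  assumes a0: "a > 0" and cc: "continuous_on UNIV c"
    and BI: "Bmon a b \<nu> c (complex_of_real \<tau>) 0 = mat 1"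
  shows "((\<lambda>\<sigma>. trace (Bmon a b \<nu> c \<sigma> 0)) has_field_derivative 0) (at (complex_of_real \<tau>))
    \<and> deriv (deriv (\<lambda>\<sigma>. trace (Bmon a b \<nu> c \<sigma> 0))) (complex_of_real \<tau>) \<noteq> 0"
proof -
  define f where "f \<sigma> = trace (Bmon a b \<nu> c \<sigma> 0)" for \<sigma>
  define C where "C = Q (X1 a b \<nu> \<tau> c) 1 (2 * pi)"
  note ts = trace_series[OF a0 cc BI]
  have fe: "\<And>\<sigma>. f \<sigma> = (\<Sum>n. cf a b \<nu> \<tau> c n * (\<sigma> - complex_of_real \<tau>) ^ n)"
    unfolding f_def by (rule ts(1))
  note eg = endgame[OF fe ts(2)]
  have c1: "cf a b \<nu> \<tau> c 1 = 0" unfolding cf_def[OF a0 cc BI] by (rule trQ1[OF a0 cc])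
  have "cf a b \<nu> \<tau> c 2 = trace (Q (X1 a b \<nu> \<tau> c) (Suc 1) (2 * pi))"
    unfolding cf_def[OF a0 cc BI] by (simp add: numeral_2_eq_2)
  also have "\<dots> = trace (C ** C) / 2" unfolding C_def by (rule trQ2[OF a0 cc])
  also have "\<dots> = - det2 C"
  proof -
    have "trace C = 0" unfolding C_def by (rule trQ1[OF a0 cc])
    then have h: "C $ 1 $ 1 + C $ 2 $ 2 = 0" by (simp add: trace_cm)
    have "C $ 2 $ 2 = (C $ 1 $ 1 + C $ 2 $ 2) - C $ 1 $ 1" by simp
    also have "\<dots> = - C $ 1 $ 1" using h by simp
    finally have "C $ 2 $ 2 = - C $ 1 $ 1" .
    then show ?thesis by (simp add: trace_cm det2_def algebra_simps)
  qed
  finally have c2: "cf a b \<nu> \<tau> c 2 = - det2 C" .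
  have "det2 C \<noteq> 0" unfolding C_def by (rule det_C1[OF a0 cc])
  then have "deriv (deriv f) (complex_of_real \<tau>) \<noteq> 0" using eg(2) c2 by simp
  moreover have "(f has_field_derivative 0) (at (complex_of_real \<tau>))" using eg(1) c1 by simp
  ultimately show ?thesis unfolding f_def[abs_def] by blast
qed

theorem proposition2p9:
  fixes a b \<nu> \<tau> :: real and k :: nat and c :: "real \<Rightarrow> complex"
  assumes "a > 0" and "b \<noteq> 0" and "0 \<le> \<nu>" and "\<nu> < 1" and "k \<ge> 2"
    and "Ck_circle k c"
    and "Bmon a b \<nu> c (complex_of_real \<tau>) 0 = mat 1"
  shows "((\<lambda>\<sigma>. trace (Bmon a b \<nu> c \<sigma> 0)) has_field_derivative 0) (at (complex_of_real \<tau>))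
    \<and> deriv (deriv (\<lambda>\<sigma>. trace (Bmon a b \<nu> c \<sigma> 0))) (complex_of_real \<tau>) \<noteq> 0"
proof -
  obtain D :: "nat \<Rightarrow> real \<Rightarrow> complex" where D0: "D 0 = c"
    and Dd: "\<forall>j<k. \<forall>t. (D j has_vector_derivative D (Suc j) t) (at t)"
    using assms(6) unfolding Ck_circle_def Ck_fun_def by blast
  have "0 < k" using assms(5) by simp
  then have "(c has_vector_derivative D 1 t) (at t)" for t using Dd D0 by auto
  then have cc: "continuous_on UNIV c" by (rule deriv_cont)
  show ?thesis by (rule core[OF assms(1) cc assms(7)])
qed


end
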